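(* Let $f=\sum_{i=1}^N \lambda_i f_i$ be convex and $L$-smooth in the sense below, let $w^*$ be a minimizer of $f$, and let $\eta>0$. Let $(w^t)_{t\ge 1}$ be generated by the asynchronous aggregation rule $$w^{t+1}=w^t-\eta\sum_{i\in\mathcal{I}_t}\lambda_i\nabla f_i\big(w^{t-\tau_i(t)}\big),$$ and define the asynchronous error $e(t)=\nabla f(w^t)-\sum_{i\in\mathcal{I}_t}\lambda_i\nabla f_i(w^{t-\tau_i(t)})$. Then for every $T\ge 1$, $$\sum_{t=1}^{T}\big[f(w^{t+1})-f(w^* )\big]\le \frac{1}{2\eta}\big(\|w^1-w^*\|^2-\|w^{T+1}-w^*\|^2\big)+\sum_{t=1}^{T}\langle e(t),w^{t+1}-w^*\rangle+\frac12\Big(L-\frac1\eta\Big)\sum_{t=1}^{T}\|w^{t+1}-w^t\|^2 .$$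
   Context: There are $N$ clients indexed by $i=1,\dots,N$, each with a differentiable local loss $f_i:\mathbb{R}^d\to\mathbb{R}$, and weights $\lambda_i\ge 0$ with $\sum_{i=1}^N\lambda_i=1$; the global loss is $f=\sum_{i=1}^N\lambda_i f_i$. Each $f_i$ satisfies, for all $w_1,w_2$: (smoothness) $f_i(w_1)-f_i(w_2)\le\langle\nabla f_i(w_2),w_1-w_2\rangle+\frac L2\|w_1-w_2\|^2$, and (convexity) $f_i(w_1)-f_i(w_2)\ge\langle\nabla f_i(w_2),w_1-w_2\rangle+\frac\mu2\|w_1-w_2\|^2$ with $\mu\ge 0$; hence $f$ satisfies the same two inequalities. $w^1$ is the initial parameter. For each iteration $t$, $\mathcal{I}_t\subseteq\{1,\dots,N\}$ is the set of clients that successfully send updates to the server at iteration $t$, and $\tau_i(t)$ is a nonnegative integer with $t-\tau_i(t)\ge 1$, the delay of client $i$ at iteration $t$ (so client $i$'s gradient used at iteration $t$ is computed at the global parameter $w^{t-\tau_i(t)}$ it received earlier). *)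

theory Defs
  imports "HOL-Analysis.Analysis"
begin

end

theory Submission
  imports Defs
begin

lemma agg_ineq:
  fixes fs :: "nat \<Rightarrow> 'a::euclidean_space \<Rightarrow> real" and grad :: "nat \<Rightarrow> 'a \<Rightarrow> 'a"
  assumes lam_nonneg: "\<And>i. i \<in> {1..N} \<Longrightarrow> lam i \<ge> 0"
    and lam_sum: "(\<Sum>i=1..N. lam i) = 1"
    and H: "\<And>i. i \<in> {1..N} \<Longrightarrow>
        fs i a - fs i b \<le> inner (grad i p) d + c"
  shows "(\<Sum>i=1..N. lam i * fs i a) - (\<Sum>i=1..N. lam i * fs i b)
         \<le> inner (\<Sum>i=1..N. lam i *\<^sub>R grad i p) d + c"
proof -
  have "(\<Sum>i=1..N. lam i * fs i a) - (\<Sum>i=1..N. lam i * fs i b)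
      = (\<Sum>i=1..N. lam i * (fs i a - fs i b))"
    by (simp add: sum_subtractf right_diff_distrib)
  also have "\<dots> \<le> (\<Sum>i=1..N. lam i * (inner (grad i p) d + c))"
    by (rule sum_mono) (simp add: H lam_nonneg mult_left_mono)
  also have "\<dots> = (\<Sum>i=1..N. lam i * inner (grad i p) d) + (\<Sum>i=1..N. lam i) * c"
    by (simp add: distrib_left sum.distrib sum_distrib_right)
  also have "\<dots> = inner (\<Sum>i=1..N. lam i *\<^sub>R grad i p) d + c"
    unfolding lam_sum by (simp add: inner_sum_left)
  finally show ?thesis .
qed

theorem lemma1:
  fixes N :: nat
    and fs :: "nat \<Rightarrow> 'a::euclidean_space \<Rightarrow> real"
    and grad :: "nat \<Rightarrow> 'a \<Rightarrow> 'a"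
    and lam :: "nat \<Rightarrow> real"
    and L \<mu> \<eta> :: real
    and w :: "nat \<Rightarrow> 'a"
    and wstar :: 'a
    and I :: "nat \<Rightarrow> nat set"
    and \<tau> :: "nat \<Rightarrow> nat \<Rightarrow> nat"
    and T :: nat
  assumes grad: "\<And>i x. i \<in> {1..N} \<Longrightarrow> GDERIV (fs i) x :> grad i x"
    and lam_nonneg: "\<And>i. i \<in> {1..N} \<Longrightarrow> lam i \<ge> 0"
    and lam_sum: "(\<Sum>i=1..N. lam i) = 1"
    and smooth: "\<And>i w1 w2. i \<in> {1..N} \<Longrightarrow>
        fs i w1 - fs i w2 \<le> inner (grad i w2) (w1 - w2) + L / 2 * (norm (w1 - w2))\<^sup>2"
    and convex: "\<And>i w1 w2. i \<in> {1..N} \<Longrightarrow>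
        fs i w1 - fs i w2 \<ge> inner (grad i w2) (w1 - w2) + \<mu> / 2 * (norm (w1 - w2))\<^sup>2"
    and mu_nonneg: "\<mu> \<ge> 0"
    and minimizer: "\<And>v. (\<Sum>i=1..N. lam i * fs i wstar) \<le> (\<Sum>i=1..N. lam i * fs i v)"
    and eta_pos: "\<eta> > 0"
    and I_sub: "\<And>t. I t \<subseteq> {1..N}"
    and delay: "\<And>i t. t \<ge> 1 \<Longrightarrow> t - \<tau> i t \<ge> 1 \<and> \<tau> i t \<le> t"
    and update: "\<And>t. t \<ge> 1 \<Longrightarrow>
        w (t + 1) = w t - \<eta> *\<^sub>R (\<Sum>i\<in>I t. lam i *\<^sub>R grad i (w (t - \<tau> i t)))"
    and T_pos: "T \<ge> 1"
  shows "(\<Sum>t=1..T. (\<Sum>i=1..N. lam i * fs i (w (t + 1))) - (\<Sum>i=1..N. lam i * fs i wstar))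
    \<le> 1 / (2 * \<eta>) * ((norm (w 1 - wstar))\<^sup>2 - (norm (w (T + 1) - wstar))\<^sup>2)
      + (\<Sum>t=1..T. inner ((\<Sum>i=1..N. lam i *\<^sub>R grad i (w t))
                           - (\<Sum>i\<in>I t. lam i *\<^sub>R grad i (w (t - \<tau> i t))))
                          (w (t + 1) - wstar))
      + 1 / 2 * (L - 1 / \<eta>) * (\<Sum>t=1..T. (norm (w (t + 1) - w t))\<^sup>2)"
proof -
  define F where "F v = (\<Sum>i=1..N. lam i * fs i v)" for v
  define G where "G v = (\<Sum>i=1..N. lam i *\<^sub>R grad i v)" for v
  define g where "g t = (\<Sum>i\<in>I t. lam i *\<^sub>R grad i (w (t - \<tau> i t)))" for t
  define e where "e t = G (w t) - g t" for t
  have step: "F (w (t+1)) - F wstar \<le> 1 / (2 * \<eta>) * ((norm (w t - wstar))\<^sup>2 - (norm (w (t + 1) - wstar))\<^sup>2)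
      + inner (e t) (w (t + 1) - wstar) + 1 / 2 * (L - 1 / \<eta>) * (norm (w (t + 1) - w t))\<^sup>2"
    if t1: "t \<ge> 1" for t
  proof -
    have s: "F (w (t+1)) - F (w t) \<le> inner (G (w t)) (w (t+1) - w t) + L / 2 * (norm (w (t+1) - w t))\<^sup>2"
      unfolding F_def G_def by (rule agg_ineq[where fs=fs and grad=grad and a="w (t+1)" and b="w t" and p="w t" and d="w (t+1) - w t" and c="L / 2 * (norm (w (t+1) - w t))\<^sup>2", OF lam_nonneg lam_sum smooth])
    have c0: "fs i wstar - fs i (w t) \<ge> inner (grad i (w t)) (wstar - w t) + 0" if "i \<in> {1..N}" for i
    proof -
      have "\<mu> / 2 * (norm (wstar - w t))\<^sup>2 \<ge> 0" using mu_nonneg by simp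
      thus ?thesis using convex[OF that, of "w t" wstar] by linarith
    qed
    have c1: "fs i (w t) - fs i wstar \<le> inner (grad i (w t)) (w t - wstar) + 0" if "i \<in> {1..N}" for i
    proof -
      have "inner (grad i (w t)) (wstar - w t) = - inner (grad i (w t)) (w t - wstar)"
        by (simp add: inner_diff_right)
      thus ?thesis using c0[OF that] by linarith
    qed
    have c: "F (w t) - F wstar \<le> inner (G (w t)) (w t - wstar) + 0"
      unfolding F_def G_def
      by (rule agg_ineq[where fs=fs and grad=grad and a="w t" and b=wstar and c=0 and p="w t" and d="w t - wstar", OF lam_nonneg lam_sum c1])
    have wu: "w (t+1) = w t - \<eta> *\<^sub>R g t" using update[OF t1] g_def by simp
    have gt: "g t = (1/\<eta>) *\<^sub>R (w t - w (t+1))" using wu eta_pos by simp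
    have Ge: "G (w t) = g t + e t" by (simp add: e_def)
    define a where "a = w t - wstar"
    define b where "b = w (t+1) - wstar"
    have ab: "w t - w (t+1) = a - b" "w (t+1) - w t = b - a" by (simp_all add: a_def b_def)
    have key: "inner (g t) (w (t+1) - wstar) = 1 / (2 * \<eta>) * ((norm a)\<^sup>2 - (norm b)\<^sup>2 - (norm (b - a))\<^sup>2)"
    proof -
      have "inner (g t) (w (t+1) - wstar) = (1/\<eta>) * inner (a - b) b"
        by (simp add: gt a_def b_def)
      also have "\<dots> = 1 / (2 * \<eta>) * ((norm a)\<^sup>2 - (norm b)\<^sup>2 - (norm (b - a))\<^sup>2)"
        using eta_pos
        by (simp add: power2_norm_eq_inner inner_diff_left inner_diff_right inner_commute field_simps)
      finally show ?thesis .
    qed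
    have "F (w (t+1)) - F wstar \<le> inner (G (w t)) (w (t+1) - wstar) + L / 2 * (norm (w (t+1) - w t))\<^sup>2"
      using s c by (simp add: inner_diff_right)
    also have "\<dots> = inner (g t) (w (t+1) - wstar) + inner (e t) (w (t + 1) - wstar) + L / 2 * (norm (w (t+1) - w t))\<^sup>2"
      by (simp add: Ge inner_add_left)
    also have "\<dots> = 1 / (2 * \<eta>) * ((norm (w t - wstar))\<^sup>2 - (norm (w (t + 1) - wstar))\<^sup>2)
      + inner (e t) (w (t + 1) - wstar) + 1 / 2 * (L - 1 / \<eta>) * (norm (w (t + 1) - w t))\<^sup>2"
      unfolding key using eta_pos by (simp add: ab a_def b_def field_simps)
    finally show ?thesis .
  qed
  have main: "(\<Sum>t=1..n. F (w (t + 1)) - F wstar)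
    \<le> 1 / (2 * \<eta>) * ((norm (w 1 - wstar))\<^sup>2 - (norm (w (n + 1) - wstar))\<^sup>2)
      + (\<Sum>t=1..n. inner (e t) (w (t + 1) - wstar))
      + 1 / 2 * (L - 1 / \<eta>) * (\<Sum>t=1..n. (norm (w (t + 1) - w t))\<^sup>2)" for n
  proof (induction n)
    case 0
    then show ?case by simp
  next
    case (Suc n)
    have "Suc n \<ge> 1" by simp
    from step[OF this] Suc.IH show ?case
      by (simp add: distrib_left algebra_simps)
  qed
  show ?thesis using main[of T] unfolding F_def e_def G_def g_def by simp
qed

end
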